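(* Let $N\ge 2$ and let $a_1,a_2,\dots,a_{2N+1}$ be a sequence in $\mathbb{Z}_N$ such that (i) $a_1=a_2=\cdots=a_N$; (ii) $a_i\ne a_1$ for all $i\ge N+1$; (iii) the terms $a_{N+1},\dots,a_{2N+1}$ are not all equal. Then there is a set of indices $I\subseteq\{1,\dots,2N+1\}$ with $|I|=N$ such that $\sum_{i\in I}a_i=0$, $I\cap\{1,\dots,N\}\neq\emptyset$, and $I\not\subseteq\{1,\dots,N\}$. *)

theory Defs
  imports "HOL-Number_Theory.Cong"
begin

end

theory Submission imports Defs begin

lemma key:
  fixes N :: nat and c :: "nat \<Rightarrow> int"
  assumes N3: "N \<ge> 3"
    and nz: "\<forall>k\<in>{1..N-1}. c k mod int N \<noteq> 0"
    and d12: "c 1 mod int N \<noteq> c 2 mod int N"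
  shows "\<exists>K\<subseteq>{1..N-1}. K \<noteq> {} \<and> (\<Sum>k\<in>K. c k) mod int N = 0"
proof -
  define h where "h j = (if j < N then (\<Sum>k\<in>{1..j}. c k) mod int N else c 2 mod int N)" for j
  have "h ` {0..N} \<subseteq> {0..<int N}" using N3 by (auto simp: h_def)
  hence "card (h ` {0..N}) \<le> card {0..<int N}" by (intro card_mono) auto
  hence "card (h ` {0..N}) < card {0..N}" by simp
  hence "\<not> inj_on h {0..N}" using card_image by fastforce
  then obtain x y where xy: "x \<in> {0..N}" "y \<in> {0..N}" "x \<noteq> y" "h x = h y"
    unfolding inj_on_def by blast
  then obtain i j where ij: "i < j" "j \<le> N" "h i = h j"
    by (metis atLeastAtMost_iff linorder_neqE_nat)
  show ?thesis
  proof (cases "j < N")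
    case True
    have split: "(\<Sum>k\<in>{1..j}. c k) = (\<Sum>k\<in>{1..i}. c k) + (\<Sum>k\<in>{i+1..j}. c k)"
    proof -
      have "{1..j} = {1..i} \<union> {i+1..j}" using ij by auto
      thus ?thesis by (simp add: sum.union_disjoint[symmetric] ivl_disj_int)
    qed
    have "(\<Sum>k\<in>{1..i}. c k) mod int N = (\<Sum>k\<in>{1..j}. c k) mod int N"
      using ij True by (simp add: h_def)
    hence "int N dvd (\<Sum>k\<in>{i+1..j}. c k)"
      unfolding split by (simp add: mod_eq_dvd_iff)
    thus ?thesis using ij True
      by (intro exI[of _ "{i+1..j}"]) auto
  next
    case False
    hence jN: "j = N" using ij by simp
    have hi: "(\<Sum>k\<in>{1..i}. c k) mod int N = c 2 mod int N"
      using ij jN by (simp add: h_def)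
    show ?thesis
    proof (cases "i \<le> 1")
      case True
      then consider "i = 0" | "i = 1" by linarith
      thus ?thesis
      proof cases
        case 1
        have "c 2 mod int N \<noteq> 0" using nz N3 by auto
        thus ?thesis using hi 1 by simp
      next
        case 2 thus ?thesis using hi d12 by simp
      qed
    next
      case False
      have split: "(\<Sum>k\<in>{1..i}. c k) = c 2 + (\<Sum>k\<in>{1..i}-{2}. c k)"
        using False by (subst sum.remove[of _ 2]) auto
      have "int N dvd (\<Sum>k\<in>{1..i}-{2}. c k)"
        using hi unfolding split by (simp add: mod_eq_dvd_iff)
      moreover have "1 \<in> {1..i}-{2}" using False by auto
      moreover have "{1..i}-{2} \<subseteq> {1..N-1}" using ij jN by auto
      ultimately show ?thesis
        by (intro exI[of _ "{1..i}-{2}"]) auto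
    qed
  qed
qed

theorem lemma3p1:
  fixes N :: nat and a :: "nat \<Rightarrow> int"
  assumes "N \<ge> 2"
    and "\<forall>i\<in>{1..N}. [a i = a 1] (mod int N)"
    and "\<forall>i\<in>{N+1..2*N+1}. \<not> [a i = a 1] (mod int N)"
    and "\<exists>i\<in>{N+1..2*N+1}. \<exists>j\<in>{N+1..2*N+1}. \<not> [a i = a j] (mod int N)"
  shows "\<exists>I. I \<subseteq> {1..2*N+1} \<and> card I = N \<and> [(\<Sum>i\<in>I. a i) = 0] (mod int N)
           \<and> I \<inter> {1..N} \<noteq> {} \<and> \<not> I \<subseteq> {1..N}"
proof -
  note A1 = assms(2) and A2 = assms(3)
  obtain p q where pq: "p \<in> {N+1..2*N+1}" "q \<in> {N+1..2*N+1}" "\<not> [a p = a q] (mod int N)"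
    using assms(4) by blast
  have N3: "N \<ge> 3"
  proof (rule ccontr)
    assume "\<not> N \<ge> 3"
    hence N2: "N = 2" using assms(1) by simp
    have "a p mod 2 \<noteq> a 1 mod 2" "a q mod 2 \<noteq> a 1 mod 2" "a p mod 2 \<noteq> a q mod 2"
    proof -
      have "\<not> [a p = a 1] (mod int N)" "\<not> [a q = a 1] (mod int N)" using A2 pq(1,2) by blast+
      thus "a p mod 2 \<noteq> a 1 mod 2" "a q mod 2 \<noteq> a 1 mod 2" "a p mod 2 \<noteq> a q mod 2"
        using pq(3) N2 unfolding cong_def by simp_all
    qed
    moreover have "x mod 2 = 0 \<or> x mod 2 = 1" for x :: int by auto
    ultimately show False by metis
  qed
  have pnq: "p \<noteq> q" using pq by auto
  define R where "R = {N+1..2*N+1} - {p,q}"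
  have cardR: "card R = N - 1" using pq pnq unfolding R_def by (subst card_Diff_subset) auto
  obtain g where g: "bij_betw g {0..<N-1} R"
    using ex_bij_betw_nat_finite[of R] cardR unfolding R_def by auto
  define f where "f k = (if k = 1 then p else if k = 2 then q else g (k - 3))" for k
  have fin: "f k \<in> {N+1..2*N+1}" if "k \<in> {1..N-1}" for k
  proof -
    have "k \<noteq> 1 \<Longrightarrow> k \<noteq> 2 \<Longrightarrow> g (k-3) \<in> R"
    proof -
      assume "k \<noteq> 1" "k \<noteq> 2"
      hence "k - 3 \<in> {0..<N-1}" using that by auto
      thus ?thesis using bij_betwE[OF g] by blast
    qed
    thus ?thesis using pq unfolding f_def R_def by auto
  qed
  have finj: "inj_on f {1..N-1}"
  proof (rule inj_onI)
    fix x y assume x: "x \<in> {1..N-1}" and y: "y \<in> {1..N-1}" and e: "f x = f y"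
    have gx: "g (x-3) \<in> R" if "x \<noteq> 1" "x \<noteq> 2"
    proof -
      have "x - 3 \<in> {0..<N-1}" using that x by auto
      thus ?thesis using bij_betwE[OF g] by blast
    qed
    have gy: "g (y-3) \<in> R" if "y \<noteq> 1" "y \<noteq> 2"
    proof -
      have "y - 3 \<in> {0..<N-1}" using that y by auto
      thus ?thesis using bij_betwE[OF g] by blast
    qed
    have ig: "inj_on g {0..<N-1}" using g bij_betw_def by blast
    show "x = y"
    proof (cases "x \<in> {1,2} \<or> y \<in> {1,2}")
      case True
      have pR: "p \<notin> R" "q \<notin> R" unfolding R_def by auto
      show ?thesis
      proof (cases "x = 1 \<or> x = 2")
        case True
        show ?thesis
        proof (cases "y = 1 \<or> y = 2")
          case True thus ?thesis using `x = 1 \<or> x = 2` e pnq unfolding f_def by auto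
        next
          case False thus ?thesis using `x = 1 \<or> x = 2` e gy pR unfolding f_def by auto
        qed
      next
        case False
        hence "y = 1 \<or> y = 2" using True by auto
        thus ?thesis using False e gx pR unfolding f_def by auto
      qed
    next
      case False
      hence "g (x-3) = g (y-3)" using e unfolding f_def by auto
      hence "x - 3 = y - 3" using ig x y by (auto dest: inj_onD)
      thus ?thesis using False x y by auto
    qed
  qed
  define c where "c k = a (f k) - a 1" for k
  have nz: "\<forall>k\<in>{1..N-1}. c k mod int N \<noteq> 0"
  proof
    fix k assume k: "k \<in> {1..N-1}"
    have "\<not> [a (f k) = a 1] (mod int N)" using A2 fin[OF k] by blast
    thus "c k mod int N \<noteq> 0" unfolding c_def cong_iff_dvd_diff by auto
  qed
  have d12: "c 1 mod int N \<noteq> c 2 mod int N"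
  proof
    assume "c 1 mod int N = c 2 mod int N"
    hence "int N dvd c 1 - c 2" by (simp add: mod_eq_dvd_iff)
    moreover have "c 1 - c 2 = a p - a q" unfolding c_def f_def by simp
    ultimately show False using pq(3) unfolding cong_iff_dvd_diff by simp
  qed
  obtain K where K: "K \<subseteq> {1..N-1}" "K \<noteq> {}" "(\<Sum>k\<in>K. c k) mod int N = 0"
    using key[OF N3 nz d12] by (elim exE conjE) (rule that)
  define J where "J = f ` K"
  define m where "m = card K"
  have finK: "finite K" using finite_subset[OF K(1)] by simp
  have injK: "inj_on f K" using finj K(1) inj_on_subset by blast
  have cJ: "card J = m" unfolding J_def m_def using injK card_image by blast
  have m1: "m \<ge> 1" using K finK unfolding m_def by (simp add: Suc_leI card_gt_0_iff)
  have "card K \<le> card {1..N-1}" by (rule card_mono) (use K(1) in auto)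
  hence mN: "m \<le> N - 1" unfolding m_def by simp
  have Jsub: "J \<subseteq> {N+1..2*N+1}" using fin K(1) unfolding J_def by blast
  define I where "I = J \<union> {1..N-m}"
  have finJ: "finite J" unfolding J_def using finK by simp
  have disj: "J \<inter> {1..N-m} = {}"
  proof -
    have "x \<notin> {1..N-m}" if "x \<in> J" for x
    proof -
      have "x \<ge> N+1" using Jsub that by auto
      thus ?thesis by auto
    qed
    thus ?thesis by blast
  qed
  have cardI: "card I = N" unfolding I_def using card_Un_disjoint[OF finJ _ disj] cJ mN by simp
  have sumJ: "(\<Sum>i\<in>J. a i) = (\<Sum>k\<in>K. c k) + int m * a 1"
  proof -
    have "(\<Sum>i\<in>J. a i) = (\<Sum>k\<in>K. a (f k))" unfolding J_def by (simp add: sum.reindex[OF injK])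
    also have "\<dots> = (\<Sum>k\<in>K. c k + a 1)" unfolding c_def by simp
    also have "\<dots> = (\<Sum>k\<in>K. c k) + int m * a 1" unfolding m_def by (simp add: sum.distrib)
    finally show ?thesis .
  qed
  have "[(\<Sum>i\<in>{1..N-m}. a i) = (\<Sum>i\<in>{1..N-m}. a 1)] (mod int N)"
    using A1 by (intro cong_sum) auto
  hence d2: "int N dvd (\<Sum>i\<in>{1..N-m}. a i) - int (N-m) * a 1"
    by (simp add: cong_iff_dvd_diff dvd_diff_commute)
  have d1: "int N dvd (\<Sum>k\<in>K. c k)" using K(3) by auto
  have "(\<Sum>i\<in>I. a i) = (\<Sum>k\<in>K. c k) + ((\<Sum>i\<in>{1..N-m}. a i) - int (N-m) * a 1) + int N * a 1"
  proof -
    have "(\<Sum>i\<in>I. a i) = (\<Sum>i\<in>J. a i) + (\<Sum>i\<in>{1..N-m}. a i)"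
      unfolding I_def by (rule sum.union_disjoint[OF finJ _ disj]) simp
    moreover have "int N * a 1 = int m * a 1 + int (N - m) * a 1"
    proof -
      have "int N = int m + int (N - m)" using mN by simp
      thus ?thesis by (metis distrib_right)
    qed
    ultimately show ?thesis using sumJ by linarith
  qed
  hence "int N dvd (\<Sum>i\<in>I. a i)" using d1 d2 by simp
  hence cong: "[(\<Sum>i\<in>I. a i) = 0] (mod int N)" by (simp add: cong_0_iff)
  have "1 \<in> I \<inter> {1..N}" unfolding I_def using mN N3 by auto
  moreover obtain k where "k \<in> K" using K(2) by blast
  hence "f k \<in> I" "f k \<notin> {1..N}" using Jsub unfolding I_def J_def by auto
  moreover have "I \<subseteq> {1..2*N+1}" unfolding I_def using Jsub by auto
  ultimately show ?thesis using cardI cong by blast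
qed

end
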